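(* Let $-\infty\le a<b\le+\infty$, $I=(a,b)$, $n\in\mathbb N$ with $n>1$, and let $\{I_j\}_{j=1}^n$ and $\{\widehat I_j\}_{j=1}^n$ be partitions in $\mathcal C_n(I)$. Then there exist indices $j_1,j_2\in\{1,\dots,n\}$ such that \[ I_{j_1}\subseteq \widehat I_{j_1}\qquad\text{and}\qquad \widehat I_{j_2}\subseteq I_{j_2}. \] Moreover, if $\{I_j\}$ and $\{\widehat I_j\}$ are distinct partitions, the indices can be chosen so that both inclusions are strict.
   Context: $\mathcal C_n(I)$ is the class of partitions $\{I_j\}_{j=1}^n$ of $I$ into open intervals $I_j=(x_{j-1},x_j)$, where $x_0:=a$, $x_n:=b$ and $x_{j-1}\le x_j$ for $1\le j\le n$ (some $I_j$ may be empty). *)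

theory Defs
  imports "HOL-Library.Extended_Real"
begin

definition open_ival :: "ereal \<Rightarrow> ereal \<Rightarrow> real set" where
  "open_ival x y = {t. x < ereal t \<and> ereal t < y}"

text \<open>Partition points of the class C_n(I), I = (a,b):
  x 0 = a, x n = b, x (j-1) \<le> x j for 1 \<le> j \<le> n.
  The j-th interval of the partition is I_j = open_ival (x (j-1)) (x j).\<close>
definition partition_pts :: "nat \<Rightarrow> ereal \<Rightarrow> ereal \<Rightarrow> (nat \<Rightarrow> ereal) \<Rightarrow> bool" where
  "partition_pts n a b x \<longleftrightarrow> x 0 = a \<and> x n = b \<and> (\<forall>j\<in>{1..n}. x (j - 1) \<le> x j)"

definition part_ival :: "(nat \<Rightarrow> ereal) \<Rightarrow> nat \<Rightarrow> real set" where
  "part_ival x j = open_ival (x (j - 1)) (x j)"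

end

theory Submission
  imports Defs
begin

lemma S0:
  assumes "v (j-1) \<le> u (j-1)" "u j \<le> v j"
  shows "part_ival u j \<subseteq> part_ival v j"
  using assms unfolding part_ival_def open_ival_def by (auto intro: le_less_trans less_le_trans)

lemma S1:
  assumes "v (j-1) \<le> u (j-1)" "u (j-1) \<le> u j" "u j < v j"
  shows "part_ival u j \<subset> part_ival v j"
proof -
  have sub: "part_ival u j \<subseteq> part_ival v j" using assms by (intro S0) auto
  obtain t where t: "u j < ereal t" "ereal t < v j" using ereal_dense2[OF assms(3)] by blast
  have "t \<in> part_ival v j" using t assms unfolding part_ival_def open_ival_def
    by (auto intro: le_less_trans)
  moreover have "t \<notin> part_ival u j" using t unfolding part_ival_def open_ival_def by auto
  ultimately show ?thesis using sub by blast
qed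

lemma S2:
  assumes "u (j-1) < v (j-1)" "v (j-1) \<le> v j" "v j \<le> u j"
  shows "part_ival v j \<subset> part_ival u j"
proof -
  have sub: "part_ival v j \<subseteq> part_ival u j" using assms by (intro S0) auto
  obtain t where t: "u (j-1) < ereal t" "ereal t < v (j-1)" using ereal_dense2[OF assms(1)] by blast
  have "t \<in> part_ival u j" using t assms unfolding part_ival_def open_ival_def
    by (auto intro: less_le_trans)
  moreover have "t \<notin> part_ival v j" using t unfolding part_ival_def open_ival_def by auto
  ultimately show ?thesis using sub by blast
qed

lemma LF:
  assumes "partition_pts n a b u" "partition_pts n a b v" "n \<ge> 1"
  shows "\<exists>j\<in>{1..n}. v (j-1) \<le> u (j-1) \<and> u j \<le> v j"
proof (rule ccontr)
  assume H: "\<not> ?thesis"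
  have "j \<le> n \<Longrightarrow> v j \<le> u j" for j
  proof (induction j)
    case 0 then show ?case using assms unfolding partition_pts_def by simp
  next
    case (Suc j) then show ?case using H by force
  qed
  hence "v (n-1) \<le> u (n-1)" by simp
  hence "v n < u n" using H assms(3) by force
  thus False using assms unfolding partition_pts_def by simp
qed

lemma LA:
  assumes "partition_pts n a b u" "partition_pts n a b v" "u k < v k" "k \<le> n"
  shows "\<exists>j\<in>{1..n}. v (j-1) \<le> u (j-1) \<and> u j < v j"
proof (rule ccontr)
  assume H: "\<not> ?thesis"
  have "j \<le> n \<Longrightarrow> v j \<le> u j" for j
  proof (induction j)
    case 0 then show ?case using assms unfolding partition_pts_def by simp
  next
    case (Suc j) then show ?case using H by force
  qed
  then show False using assms(3,4) by (simp add: not_le[symmetric])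
qed

lemma LB:
  assumes "partition_pts n a b u" "partition_pts n a b v" "u k < v k" "k \<le> n"
  shows "\<exists>j\<in>{1..n}. u (j-1) < v (j-1) \<and> v j \<le> u j"
proof (rule ccontr)
  assume H: "\<not> ?thesis"
  have "i \<le> n - k \<Longrightarrow> u (k+i) < v (k+i)" for i
  proof (induction i)
    case 0 then show ?case using assms by simp
  next
    case (Suc i)
    hence "u (Suc (k+i) - 1) < v (Suc (k+i) - 1)" by simp
    moreover have "Suc (k+i) \<in> {1..n}" using Suc.prems by simp
    ultimately have "u (Suc (k+i)) < v (Suc (k+i))" using H by (meson not_le)
    then show ?case by simp
  qed
  from this[of "n-k"] assms(4) have "u n < v n" by simp
  thus False using assms unfolding partition_pts_def by simp
qed

lemma eq_ival:
  assumes "\<forall>i\<le>n. x i = y i" "j \<in> {1..n}"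
  shows "part_ival x j = part_ival y j"
  using assms unfolding part_ival_def by (metis atLeastAtMost_iff diff_le_self le_trans)

theorem lemma2p12:
  fixes a b :: ereal and n :: nat and x y :: "nat \<Rightarrow> ereal"
  assumes "a < b" and "n > 1"
    and "partition_pts n a b x" and "partition_pts n a b y"
  shows "(\<exists>j1\<in>{1..n}. \<exists>j2\<in>{1..n}.
            part_ival x j1 \<subseteq> part_ival y j1 \<and> part_ival y j2 \<subseteq> part_ival x j2)
       \<and> ((\<exists>j\<in>{1..n}. part_ival x j \<noteq> part_ival y j) \<longrightarrow>
          (\<exists>j1\<in>{1..n}. \<exists>j2\<in>{1..n}.
            part_ival x j1 \<subset> part_ival y j1 \<and> part_ival y j2 \<subset> part_ival x j2))"
proof
  have n1: "n \<ge> 1" using assms by simp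
  obtain j1 where "j1 \<in> {1..n}" "part_ival x j1 \<subseteq> part_ival y j1"
    using LF[OF assms(3,4) n1] S0 by blast
  moreover obtain j2 where "j2 \<in> {1..n}" "part_ival y j2 \<subseteq> part_ival x j2"
    using LF[OF assms(4,3) n1] S0 by blast
  ultimately show "\<exists>j1\<in>{1..n}. \<exists>j2\<in>{1..n}.
            part_ival x j1 \<subseteq> part_ival y j1 \<and> part_ival y j2 \<subseteq> part_ival x j2" by blast
next
  have mono: "\<And>u j. partition_pts n a b u \<Longrightarrow> j \<in> {1..n} \<Longrightarrow> u (j-1) \<le> u j"
    unfolding partition_pts_def by blast
  show "(\<exists>j\<in>{1..n}. part_ival x j \<noteq> part_ival y j) \<longrightarrow>
          (\<exists>j1\<in>{1..n}. \<exists>j2\<in>{1..n}.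
            part_ival x j1 \<subset> part_ival y j1 \<and> part_ival y j2 \<subset> part_ival x j2)"
  proof
    assume "\<exists>j\<in>{1..n}. part_ival x j \<noteq> part_ival y j"
    then obtain k where k: "k \<le> n" "x k \<noteq> y k" using eq_ival by blast
    show "\<exists>j1\<in>{1..n}. \<exists>j2\<in>{1..n}.
            part_ival x j1 \<subset> part_ival y j1 \<and> part_ival y j2 \<subset> part_ival x j2"
    proof (cases "x k < y k")
      case True
      obtain j1 where "j1 \<in> {1..n}" "part_ival x j1 \<subset> part_ival y j1"
        using LA[OF assms(3,4) True k(1)] S1 mono[OF assms(3)] by blast
      moreover obtain j2 where "j2 \<in> {1..n}" "part_ival y j2 \<subset> part_ival x j2"
        using LB[OF assms(3,4) True k(1)] S2 mono[OF assms(4)] by blast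
      ultimately show ?thesis by blast
    next
      case False
      hence F: "y k < x k" using k(2) by (simp add: order.not_eq_order_implies_strict not_less)
      obtain j1 where "j1 \<in> {1..n}" "part_ival y j1 \<subset> part_ival x j1"
        using LA[OF assms(4,3) F k(1)] S1 mono[OF assms(4)] by blast
      moreover obtain j2 where "j2 \<in> {1..n}" "part_ival x j2 \<subset> part_ival y j2"
        using LB[OF assms(4,3) F k(1)] S2 mono[OF assms(3)] by blast
      ultimately show ?thesis by blast
    qed
  qed
qed

end
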